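(* Let $G$ be an abelian Hausdorff topological group in which every cyclic subgroup is discrete. The following are equivalent: (i) $G$ contains an infinite absolutely summable set; (ii) $G$ contains a subgroup topologically isomorphic to $P_B$ for some infinite subset $B$ of $G$. Furthermore, if $G$ is complete, these are also equivalent to: (iii) $G$ contains an infinite absolutely Cauchy summable set.
   Context: For $a\in G$, $\langle a\rangle$ is the cyclic subgroup generated by $a$ with the subspace topology, and $P_B=\prod_{b\in B}\langle b\rangle$ carries the Tychonoff product topology. $A\subseteq G$ is absolutely summable if for every family $\{z_a:a\in A\}$ of integers there is $g\in G$ such that for every neighbourhood $U$ of $0$ there is a finite $F\subseteq A$ with $g-\sum_{a\in E}z_aa\in U$ for every finite $E\subseteq A$ containing $F$. $A$ is absolutely Cauchy summable if for every neighbourhood $U$ of $0$ there is a finite $F\subseteq A$ such that the subgroup generated by $A\setminus F$ is contained in $U$. *)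

theory Defs
  imports "HOL-Analysis.Analysis"
begin

fun natmult :: "nat \<Rightarrow> 'a::group_add \<Rightarrow> 'a" where
  "natmult 0 a = 0"
| "natmult (Suc n) a = a + natmult n a"

definition zmult :: "int \<Rightarrow> 'a::group_add \<Rightarrow> 'a" where
  "zmult z a = (if 0 \<le> z then natmult (nat z) a else - natmult (nat (- z)) a)"

definition is_subgroup :: "'a::group_add set \<Rightarrow> bool" where
  "is_subgroup H \<longleftrightarrow> 0 \<in> H \<and> (\<forall>x\<in>H. \<forall>y\<in>H. x - y \<in> H)"

definition gen_subgroup :: "'a::group_add set \<Rightarrow> 'a set" where
  "gen_subgroup S = \<Inter>{H. is_subgroup H \<and> S \<subseteq> H}"

definition cyclic_subgroup :: "'a::group_add \<Rightarrow> 'a set" where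
  "cyclic_subgroup a = range (\<lambda>z. zmult z a)"

definition discrete_subspace :: "'a::topological_space set \<Rightarrow> bool" where
  "discrete_subspace S \<longleftrightarrow> (\<forall>x\<in>S. \<exists>U. open U \<and> U \<inter> S = {x})"

definition absolutely_summable :: "'a::topological_ab_group_add set \<Rightarrow> bool" where
  "absolutely_summable A \<longleftrightarrow>
     (\<forall>z :: 'a \<Rightarrow> int. \<exists>g. \<forall>U. open U \<and> 0 \<in> U \<longrightarrow>
        (\<exists>F. finite F \<and> F \<subseteq> A \<and>
           (\<forall>E. finite E \<and> F \<subseteq> E \<and> E \<subseteq> A \<longrightarrow> g - (\<Sum>a\<in>E. zmult (z a) a) \<in> U)))"

definition absolutely_Cauchy_summable :: "'a::topological_ab_group_add set \<Rightarrow> bool" where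
  "absolutely_Cauchy_summable A \<longleftrightarrow>
     (\<forall>U. open U \<and> 0 \<in> U \<longrightarrow>
        (\<exists>F. finite F \<and> F \<subseteq> A \<and> gen_subgroup (A - F) \<subseteq> U))"

text \<open>Completeness of an abelian topological group w.r.t. its group uniformity:
  every Cauchy filter converges.\<close>
definition group_complete :: "'a::topological_ab_group_add itself \<Rightarrow> bool" where
  "group_complete _ \<longleftrightarrow>
     (\<forall>F :: 'a filter. F \<noteq> bot \<and>
        (\<forall>U. open U \<and> 0 \<in> U \<longrightarrow> (\<exists>S. eventually (\<lambda>x. x \<in> S) F \<and> (\<forall>x\<in>S. \<forall>y\<in>S. x - y \<in> U)))
        \<longrightarrow> (\<exists>g. F \<le> nhds g))"

text \<open>The product P_B of the cyclic subgroups <b>, b in B, with Tychonoff topology;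
  elements are extensional functions on B, group operation pointwise.\<close>
definition P_top :: "'a::topological_ab_group_add set \<Rightarrow> ('a \<Rightarrow> 'a) topology" where
  "P_top B = product_topology (\<lambda>b. subtopology euclidean (cyclic_subgroup b)) B"

definition P_add :: "'a::topological_ab_group_add set \<Rightarrow> ('a \<Rightarrow> 'a) \<Rightarrow> ('a \<Rightarrow> 'a) \<Rightarrow> ('a \<Rightarrow> 'a)" where
  "P_add B x y = restrict (\<lambda>b. x b + y b) B"

definition contains_copy_of_P :: "'a::topological_ab_group_add set \<Rightarrow> bool" where
  "contains_copy_of_P B \<longleftrightarrow>
     (\<exists>(H::'a set) f. is_subgroup H \<and>
        bij_betw f (topspace (P_top B)) H \<and>
        (\<forall>x\<in>topspace (P_top B). \<forall>y\<in>topspace (P_top B). f (P_add B x y) = f x + f y) \<and>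
        homeomorphic_map (P_top B) (subtopology euclidean H) f)"

end

theory Submission
  imports Defs
begin

lemma natmult_add: "natmult (m+n) (a::'a::ab_group_add) = natmult m a + natmult n a"
  by (induction m) (auto simp: add.assoc)

lemma zmult_succ: "zmult (z+1) (a::'a::ab_group_add) = zmult z a + a"
proof (cases "0 \<le> z")
  case True
  then have "nat (z+1) = Suc (nat z)" by simp
  then show ?thesis using True by (simp add: zmult_def add.commute)
next
  case False
  show ?thesis
  proof (cases "z = -1")
    case True then show ?thesis by (simp add: zmult_def)
  next
    case False2: False
    with False have "nat (-z) = Suc (nat (-(z+1)))" by simp
    then show ?thesis using False False2 by (simp add: zmult_def)
  qed
qed

lemma zmult_0 [simp]: "zmult 0 a = 0" by (simp add: zmult_def)
lemma zmult_1 [simp]: "zmult 1 (a::'a::ab_group_add) = a" by (simp add: zmult_def)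
lemma natmult_zero [simp]: "natmult n (0::'a::ab_group_add) = 0" by (induction n) auto
lemma zmult_zero [simp]: "zmult z (0::'a::ab_group_add) = 0" by (simp add: zmult_def)

lemma zmult_add: "zmult (z + w) (a::'a::ab_group_add) = zmult z a + zmult w a"
proof (induction w rule: int_induct[where k=0])
  case base then show ?case by simp
next
  case (step1 i)
  have "zmult (z + (i+1)) a = zmult (z+i) a + a" using zmult_succ[of "z+i" a] by (simp add: add.assoc)
  then show ?case using step1 zmult_succ[of i a] by (simp add: add.assoc)
next
  case (step2 i)
  have "zmult (z + i) a = zmult (z+(i-1)) a + a" using zmult_succ[of "z+(i - 1)" a] by simp
  moreover have "zmult i a = zmult (i - 1) a + a" using zmult_succ[of "i - 1" a] by simp
  ultimately show ?case using step2 by (simp add: algebra_simps)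
qed

lemma zmult_minus: "zmult (- z) (a::'a::ab_group_add) = - zmult z a"
proof -
  have "zmult z a + zmult (-z) a = 0" using zmult_add[of z "-z" a] by simp
  then show ?thesis by (metis minus_unique)
qed

lemma zmult_diff: "zmult (z - w) (a::'a::ab_group_add) = zmult z a - zmult w a"
  using zmult_add[of z "-w" a] zmult_minus[of w a] by simp

lemma nbhd_diff:
  fixes W :: "'a::topological_ab_group_add set"
  assumes "open W" "0 \<in> W"
  shows "\<exists>V. open V \<and> 0 \<in> V \<and> (\<forall>x\<in>V. \<forall>y\<in>V. x - y \<in> W)"
proof -
  have "((\<lambda>p. fst p - snd p) \<longlongrightarrow> 0 - 0) (nhds (0::'a) \<times>\<^sub>F nhds 0)"
    by (intro tendsto_diff filterlim_fst filterlim_snd)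
  then have "eventually (\<lambda>p. fst p - snd p \<in> W) (nhds (0::'a) \<times>\<^sub>F nhds 0)"
    using assms by (simp add: topological_tendstoD)
  then obtain P Q where PQ: "eventually P (nhds 0)" "eventually Q (nhds 0)"
     "\<forall>x y. P x \<longrightarrow> Q y \<longrightarrow> x - y \<in> W"
    unfolding eventually_prod_filter by auto
  from PQ(1) obtain S1 where S1: "open S1" "0 \<in> S1" "\<forall>x\<in>S1. P x" unfolding eventually_nhds by auto
  from PQ(2) obtain S2 where S2: "open S2" "0 \<in> S2" "\<forall>x\<in>S2. Q x" unfolding eventually_nhds by auto
  show ?thesis
    by (rule exI[of _ "S1 \<inter> S2"]) (use S1 S2 PQ(3) in auto)
qed

lemma nbhd_diff3:
  fixes W :: "'a::topological_ab_group_add set"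
  assumes "open W" "0 \<in> W"
  shows "\<exists>V. open V \<and> 0 \<in> V \<and> V \<subseteq> W \<and> (\<forall>x\<in>V. \<forall>y\<in>V. \<forall>z\<in>V. x - y - z \<in> W)"
proof -
  obtain V1 where V1: "open V1" "0 \<in> V1" "\<forall>x\<in>V1. \<forall>y\<in>V1. x - y \<in> W" using nbhd_diff[OF assms] by blast
  obtain V2 where V2: "open V2" "0 \<in> V2" "\<forall>x\<in>V2. \<forall>y\<in>V2. x - y \<in> V1" using nbhd_diff[OF V1(1,2)] by blast
  have s21: "V2 \<subseteq> V1"
  proof
    fix x assume "x \<in> V2" then have "x - 0 \<in> V1" using V2(2,3) by blast
    then show "x \<in> V1" by simp
  qed
  have s1: "V1 \<subseteq> W"
  proof
    fix x assume "x \<in> V1" then have "x - 0 \<in> W" using V1(2,3) by blast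
    then show "x \<in> W" by simp
  qed
  have "\<forall>x\<in>V2. \<forall>y\<in>V2. \<forall>z\<in>V2. x - y - z \<in> W"
  proof (intro ballI)
    fix x y z assume "x \<in> V2" "y \<in> V2" "z \<in> V2"
    then have "x - y \<in> V1" "z \<in> V1" using V2(3) s21 by auto
    then show "x - y - z \<in> W" using V1(3) by blast
  qed
  then show ?thesis using V2(1,2) s21 s1 by (intro exI[of _ V2]) auto
qed



lemma subgroup_zero: "is_subgroup H \<Longrightarrow> 0 \<in> H" by (simp add: is_subgroup_def)
lemma subgroup_diff: "is_subgroup H \<Longrightarrow> x \<in> H \<Longrightarrow> y \<in> H \<Longrightarrow> x - y \<in> H" by (simp add: is_subgroup_def)
lemma subgroup_neg: "is_subgroup H \<Longrightarrow> x \<in> H \<Longrightarrow> - x \<in> H"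
  using subgroup_diff[of H 0 x] subgroup_zero[of H] by simp
lemma subgroup_add: "is_subgroup (H::'a::ab_group_add set) \<Longrightarrow> x \<in> H \<Longrightarrow> y \<in> H \<Longrightarrow> x + y \<in> H"
  using subgroup_diff[of H x "-y"] subgroup_neg[of H y] by simp

lemma subgroup_sum: "is_subgroup (H::'a::ab_group_add set) \<Longrightarrow> (\<And>a. a \<in> E \<Longrightarrow> f a \<in> H) \<Longrightarrow> sum f E \<in> H"
proof (induction E rule: infinite_finite_induct)
  case (infinite A) then show ?case by (simp add: subgroup_zero)
next
  case empty then show ?case by (simp add: subgroup_zero)
next
  case (insert x F) then show ?case by (simp add: subgroup_add)
qed

lemma subgroup_zmult: "is_subgroup (H::'a::ab_group_add set) \<Longrightarrow> a \<in> H \<Longrightarrow> zmult z a \<in> H"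
proof (induction z rule: int_induct[where k=0])
  case base then show ?case by (simp add: subgroup_zero)
next
  case (step1 i) then show ?case by (simp add: zmult_succ subgroup_add)
next
  case (step2 i)
  have "zmult (i - 1) a = zmult i a - a" using zmult_succ[of "i - 1" a] by simp
  then show ?case using step2 by (simp add: subgroup_diff)
qed

lemma cyclic_zmult: "zmult z a \<in> cyclic_subgroup a" by (simp add: cyclic_subgroup_def)
lemma cyclic_self: "(a::'a::ab_group_add) \<in> cyclic_subgroup a" using cyclic_zmult[of 1 a] by simp
lemma cyclic_zero: "(0::'a::ab_group_add) \<in> cyclic_subgroup a" using cyclic_zmult[of 0 a] by simp
lemma cyclic_diff: "x \<in> cyclic_subgroup a \<Longrightarrow> y \<in> cyclic_subgroup (a::'a::ab_group_add) \<Longrightarrow> x - y \<in> cyclic_subgroup a"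
  unfolding cyclic_subgroup_def by (auto simp flip: zmult_diff)
lemma cyclic_add: "x \<in> cyclic_subgroup a \<Longrightarrow> y \<in> cyclic_subgroup (a::'a::ab_group_add) \<Longrightarrow> x + y \<in> cyclic_subgroup a"
  unfolding cyclic_subgroup_def by (auto simp flip: zmult_add)
lemma cyclic_subgroup_sub: "is_subgroup (H::'a::ab_group_add set) \<Longrightarrow> a \<in> H \<Longrightarrow> cyclic_subgroup a \<subseteq> H"
  unfolding cyclic_subgroup_def using subgroup_zmult by blast

lemma gen_is_subgroup: "is_subgroup (gen_subgroup S)"
  unfolding gen_subgroup_def is_subgroup_def by auto
lemma gen_sub: "S \<subseteq> gen_subgroup S" unfolding gen_subgroup_def by auto
lemma gen_least: "is_subgroup H \<Longrightarrow> S \<subseteq> H \<Longrightarrow> gen_subgroup S \<subseteq> H" unfolding gen_subgroup_def by auto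
lemma gen_mono: "S \<subseteq> T \<Longrightarrow> gen_subgroup S \<subseteq> gen_subgroup T"
  using gen_least[OF gen_is_subgroup, of S T] gen_sub[of T] by blast

definition combos :: "'a::ab_group_add set \<Rightarrow> 'a set" where
  "combos S = {x. \<exists>E z. finite E \<and> E \<subseteq> S \<and> x = (\<Sum>a\<in>E. zmult (z a) a)}"

lemma combos_in_gen: "finite E \<Longrightarrow> E \<subseteq> S \<Longrightarrow> (\<Sum>a\<in>E. zmult (z a) (a::'a::ab_group_add)) \<in> gen_subgroup S"
  by (intro subgroup_sum gen_is_subgroup subgroup_zmult) (use gen_sub in blast)

lemma sum_extend_combo:
  assumes "finite E'" "E \<subseteq> E'"
  shows "(\<Sum>a\<in>E. zmult (z a) (a::'a::ab_group_add)) = (\<Sum>a\<in>E'. zmult (if a \<in> E then z a else 0) a)"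
proof -
  have "(\<Sum>a\<in>E'. zmult (if a \<in> E then z a else 0) a) = (\<Sum>a\<in>E'. if a \<in> E then zmult (z a) a else 0)"
    by (intro sum.cong) auto
  also have "\<dots> = (\<Sum>a\<in>E'\<inter>E. zmult (z a) a)" by (simp add: sum.inter_restrict[OF assms(1)])
  also have "E' \<inter> E = E" using assms by auto
  finally show ?thesis by simp
qed

lemma combos_subgroup: "is_subgroup (combos (S::'a::ab_group_add set))"
  unfolding is_subgroup_def
proof (intro conjI ballI)
  show "0 \<in> combos S" unfolding combos_def by (intro CollectI exI[of _ "{}"] exI[of _ "\<lambda>_. 0"]) auto
next
  fix x y assume "x \<in> combos S" "y \<in> combos S"
  then obtain E z E' z' where EE: "finite E" "E \<subseteq> S" "x = (\<Sum>a\<in>E. zmult (z a) a)"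
      "finite E'" "E' \<subseteq> S" "y = (\<Sum>a\<in>E'. zmult (z' a) a)" unfolding combos_def by blast
  let ?U = "E \<union> E'"
  have "x = (\<Sum>a\<in>?U. zmult (if a \<in> E then z a else 0) a)" using EE sum_extend_combo[of ?U E z] by auto
  moreover have "y = (\<Sum>a\<in>?U. zmult (if a \<in> E' then z' a else 0) a)" using EE sum_extend_combo[of ?U E' z'] by auto
  ultimately have "x - y = (\<Sum>a\<in>?U. zmult ((if a \<in> E then z a else 0) - (if a \<in> E' then z' a else 0)) a)"
    by (simp add: zmult_diff sum_subtractf)
  moreover have "finite ?U" "?U \<subseteq> S" using EE by auto
  ultimately show "x - y \<in> combos S" unfolding combos_def by (intro CollectI exI conjI)
qed

lemma gen_eq_combos: "gen_subgroup (S::'a::ab_group_add set) = combos S"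
proof
  show "gen_subgroup S \<subseteq> combos S"
  proof (rule gen_least[OF combos_subgroup])
    show "S \<subseteq> combos S"
    proof
      fix a assume "a \<in> S"
      then have "a = (\<Sum>b\<in>{a}. zmult ((\<lambda>_. 1) b) b)" by simp
      then show "a \<in> combos S" unfolding combos_def using \<open>a \<in> S\<close> by (intro CollectI exI[of _ "{a}"] exI[of _ "\<lambda>_. 1"]) auto
    qed
  qed
next
  show "combos S \<subseteq> gen_subgroup S" unfolding combos_def using combos_in_gen by auto
qed

lemma has_sum_iff_raw:
  fixes f :: "'b \<Rightarrow> 'a::topological_ab_group_add"
  shows "(f has_sum g) A \<longleftrightarrow> (\<forall>U. open U \<and> 0 \<in> U \<longrightarrow> (\<exists>F. finite F \<and> F \<subseteq> A \<and>
           (\<forall>E. finite E \<and> F \<subseteq> E \<and> E \<subseteq> A \<longrightarrow> g - sum f E \<in> U)))"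
proof -
  have cont: "continuous_on UNIV (\<lambda>u::'a. g - u)" by (intro continuous_intros)
  show ?thesis
  proof
    assume H: "(f has_sum g) A"
    show "\<forall>U. open U \<and> 0 \<in> U \<longrightarrow> (\<exists>F. finite F \<and> F \<subseteq> A \<and>
           (\<forall>E. finite E \<and> F \<subseteq> E \<and> E \<subseteq> A \<longrightarrow> g - sum f E \<in> U))"
    proof (intro allI impI)
      fix U :: "'a set" assume U: "open U \<and> 0 \<in> U"
      have o: "open ((\<lambda>u. g - u) -` U)" using U cont by (intro open_vimage) auto
      have m: "g \<in> (\<lambda>u. g - u) -` U" using U by simp
      have "eventually (\<lambda>E. sum f E \<in> (\<lambda>u. g - u) -` U) (finite_subsets_at_top A)"
        using topological_tendstoD[OF H[unfolded has_sum_def] o m] .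
      then obtain X where "finite X" "X \<subseteq> A" "\<forall>Y. finite Y \<and> X \<subseteq> Y \<and> Y \<subseteq> A \<longrightarrow> sum f Y \<in> (\<lambda>u. g - u) -` U"
        unfolding eventually_finite_subsets_at_top by auto
      then show "\<exists>F. finite F \<and> F \<subseteq> A \<and> (\<forall>E. finite E \<and> F \<subseteq> E \<and> E \<subseteq> A \<longrightarrow> g - sum f E \<in> U)"
        by (intro exI[of _ X]) auto
    qed
  next
    assume H: "\<forall>U. open U \<and> 0 \<in> U \<longrightarrow> (\<exists>F. finite F \<and> F \<subseteq> A \<and>
           (\<forall>E. finite E \<and> F \<subseteq> E \<and> E \<subseteq> A \<longrightarrow> g - sum f E \<in> U))"
    show "(f has_sum g) A" unfolding has_sum_def
    proof (rule topological_tendstoI)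
      fix S :: "'a set" assume S: "open S" "g \<in> S"
      have "open ((\<lambda>u. g - u) -` S)" using S cont by (intro open_vimage) auto
      moreover have "0 \<in> (\<lambda>u. g - u) -` S" using S by simp
      ultimately obtain F where "finite F" "F \<subseteq> A"
          "\<forall>E. finite E \<and> F \<subseteq> E \<and> E \<subseteq> A \<longrightarrow> g - sum f E \<in> (\<lambda>u. g - u) -` S"
        using H[rule_format, of "(\<lambda>u. g - u) -` S"] by auto
      then show "eventually (\<lambda>E. sum f E \<in> S) (finite_subsets_at_top A)"
        unfolding eventually_finite_subsets_at_top by (intro exI[of _ F]) simp
    qed
  qed
qed

lemma abs_summable_iff:
  "absolutely_summable (A::'a::topological_ab_group_add set) \<longleftrightarrow> (\<forall>z. (\<lambda>a. zmult (z a) a) summable_on A)"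
  unfolding absolutely_summable_def summable_on_def has_sum_iff_raw by simp



lemma finite_in_chain:
  assumes "finite X" "X \<subseteq> (\<Union>n. D n)" "incseq D"
  shows "\<exists>n. X \<subseteq> D n"
  using assms(1,2)
proof (induction X rule: finite_induct)
  case empty then show ?case by simp
next
  case (insert x F)
  then obtain n where n: "F \<subseteq> D n" by auto
  from insert obtain m where m: "x \<in> D m" by auto
  have "D n \<subseteq> D (max n m)" "D m \<subseteq> D (max n m)" using assms(3) by (auto simp: incseq_def)
  then show ?case using n m by (intro exI[of _ "max n m"]) auto
qed

lemma abs_summable_imp_Cauchy:
  fixes A :: "'a::topological_ab_group_add set"
  assumes AS: "absolutely_summable A"
  shows "absolutely_Cauchy_summable A"
  unfolding absolutely_Cauchy_summable_def
proof (rule ccontr)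
  assume "\<not> (\<forall>U. open U \<and> 0 \<in> U \<longrightarrow> (\<exists>F. finite F \<and> F \<subseteq> A \<and> gen_subgroup (A - F) \<subseteq> U))"
  then obtain U where U: "open U" "0 \<in> U" and bad: "\<And>F. finite F \<Longrightarrow> F \<subseteq> A \<Longrightarrow> \<not> gen_subgroup (A - F) \<subseteq> U"
    by blast
  have "\<forall>F. \<exists>p. finite F \<and> F \<subseteq> A \<longrightarrow> finite (fst p) \<and> fst p \<subseteq> A - F \<and> (\<Sum>a\<in>fst p. zmult (snd p a) a) \<notin> U"
  proof
    fix F show "\<exists>p. finite F \<and> F \<subseteq> A \<longrightarrow> finite (fst p) \<and> fst p \<subseteq> A - F \<and> (\<Sum>a\<in>fst p. zmult (snd p a) a) \<notin> U"
    proof (cases "finite F \<and> F \<subseteq> A")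
      case True
      then have "\<not> combos (A - F) \<subseteq> U" using bad[of F] gen_eq_combos[of "A - F"] by simp
      then obtain x where "x \<in> combos (A - F)" "x \<notin> U" by auto
      then obtain E z where "finite E" "E \<subseteq> A - F" "x = (\<Sum>a\<in>E. zmult (z a) a)" unfolding combos_def by auto
      then show ?thesis using \<open>x \<notin> U\<close> by (intro exI[of _ "(E,z)"]) auto
    qed auto
  qed
  from choice[OF this] obtain c where c0: "\<forall>F. finite F \<and> F \<subseteq> A \<longrightarrow> finite (fst (c F)) \<and> fst (c F) \<subseteq> A - F \<and> (\<Sum>a\<in>fst (c F). zmult (snd (c F) a) a) \<notin> U"
    by blast
  have c: "\<And>F. finite F \<Longrightarrow> F \<subseteq> A \<Longrightarrow> finite (fst (c F)) \<and> fst (c F) \<subseteq> A - F \<and> (\<Sum>a\<in>fst (c F). zmult (snd (c F) a) a) \<notin> U"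
    using c0 by blast
  define D where "D = rec_nat {} (\<lambda>n Dn. Dn \<union> fst (c Dn))"
  have D0: "D 0 = {}" and DS: "\<And>n. D (Suc n) = D n \<union> fst (c (D n))" by (simp_all add: D_def)
  have Dfin: "finite (D n) \<and> D n \<subseteq> A" for n
    by (induction n) (use c in \<open>auto simp: D0 DS\<close>)
  define E where "E n = fst (c (D n))" for n
  define zs where "zs n = snd (c (D n))" for n
  have E: "finite (E n)" "E n \<subseteq> A - D n" "(\<Sum>a\<in>E n. zmult (zs n a) a) \<notin> U" for n
    using c[of "D n"] Dfin[of n] by (auto simp: E_def zs_def)
  have inc: "incseq D" by (rule incseq_SucI) (simp add: DS)
  have ED: "E n \<subseteq> D (Suc n)" for n by (simp add: DS E_def)
  have disj: "m \<noteq> n \<Longrightarrow> E m \<inter> E n = {}" for m n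
  proof -
    have *: "m < n \<Longrightarrow> E m \<inter> E n = {}" for m n
    proof -
      assume "m < n"
      then have "D (Suc m) \<subseteq> D n" using inc by (simp add: incseq_def)
      then show ?thesis using ED[of m] E(2)[of n] by blast
    qed
    assume "m \<noteq> n" then show ?thesis using *[of m n] *[of n m] by (cases "m < n") auto
  qed
  define Z where "Z a = (if \<exists>n. a \<in> E n then zs (THE n. a \<in> E n) a else 0)" for a
  have Z: "a \<in> E n \<Longrightarrow> Z a = zs n a" for a n
  proof -
    assume a: "a \<in> E n"
    have "(THE n. a \<in> E n) = n" using a disj by (intro the_equality) auto
    then show ?thesis using a by (auto simp: Z_def)
  qed
  obtain W where W: "open W" "0 \<in> W" "\<forall>x\<in>W. \<forall>y\<in>W. x - y \<in> U" using nbhd_diff[OF U] by blast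
  obtain g where g: "\<forall>U. open U \<and> 0 \<in> U \<longrightarrow> (\<exists>F. finite F \<and> F \<subseteq> A \<and>
           (\<forall>E. finite E \<and> F \<subseteq> E \<and> E \<subseteq> A \<longrightarrow> g - (\<Sum>a\<in>E. zmult (Z a) a) \<in> U))"
    using AS[unfolded absolutely_summable_def, rule_format, of Z] by (elim exE)
  from g[rule_format, of W] W obtain F0 where F0: "finite F0" "F0 \<subseteq> A"
    "\<And>E. finite E \<Longrightarrow> F0 \<subseteq> E \<Longrightarrow> E \<subseteq> A \<Longrightarrow> g - (\<Sum>a\<in>E. zmult (Z a) a) \<in> W" by auto
  have "finite (F0 \<inter> (\<Union>n. D n))" using F0 by simp
  then obtain n where n: "F0 \<inter> (\<Union>n. D n) \<subseteq> D n" using finite_in_chain[OF _ _ inc] by blast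
  have "E n \<subseteq> (\<Union>n. D n)" using ED by blast
  then have dis: "F0 \<inter> E n = {}" using n E(2)[of n] by blast
  have w1: "g - (\<Sum>a\<in>F0. zmult (Z a) a) \<in> W" using F0 by simp
  have w2: "g - (\<Sum>a\<in>F0 \<union> E n. zmult (Z a) a) \<in> W" using F0 E(1,2)[of n] by (intro F0(3)) auto
  have "(\<Sum>a\<in>F0 \<union> E n. zmult (Z a) a) = (\<Sum>a\<in>F0. zmult (Z a) a) + (\<Sum>a\<in>E n. zmult (Z a) a)"
    using dis F0(1) E(1)[of n] by (simp add: sum.union_disjoint)
  moreover have "(\<Sum>a\<in>E n. zmult (Z a) a) = (\<Sum>a\<in>E n. zmult (zs n a) a)"
    using Z by (intro sum.cong) auto
  ultimately have "(g - (\<Sum>a\<in>F0. zmult (Z a) a)) - (g - (\<Sum>a\<in>F0 \<union> E n. zmult (Z a) a)) = (\<Sum>a\<in>E n. zmult (zs n a) a)"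
    by simp
  moreover have "(g - (\<Sum>a\<in>F0. zmult (Z a) a)) - (g - (\<Sum>a\<in>F0 \<union> E n. zmult (Z a) a)) \<in> U"
    using W(3) w1 w2 by blast
  ultimately show False using E(3)[of n] by simp
qed

lemma Cauchy_imp_abs_summable:
  fixes A :: "'a::topological_ab_group_add set"
  assumes C: "absolutely_Cauchy_summable A" and comp: "group_complete TYPE('a)"
  shows "absolutely_summable A"
  unfolding abs_summable_iff
proof
  fix z :: "'a \<Rightarrow> int"
  define f where "f a = zmult (z a) a" for a
  define FF where "FF = filtermap (sum f) (finite_subsets_at_top A)"
  have nb: "FF \<noteq> bot" unfolding FF_def by (simp add: filtermap_bot_iff finite_subsets_at_top_neq_bot)
  have cau: "\<forall>U. open U \<and> 0 \<in> U \<longrightarrow> (\<exists>S. eventually (\<lambda>x. x \<in> S) FF \<and> (\<forall>x\<in>S. \<forall>y\<in>S. x - y \<in> U))"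
  proof (intro allI impI)
    fix U :: "'a set" assume U: "open U \<and> 0 \<in> U"
    then obtain F0 where F0: "finite F0" "F0 \<subseteq> A" "gen_subgroup (A - F0) \<subseteq> U"
      using C unfolding absolutely_Cauchy_summable_def by blast
    define S where "S = sum f ` {E. finite E \<and> F0 \<subseteq> E \<and> E \<subseteq> A}"
    have ev: "eventually (\<lambda>x. x \<in> S) FF"
      unfolding FF_def eventually_filtermap eventually_finite_subsets_at_top S_def
    proof (intro exI[of _ F0] conjI allI impI)
      fix Y assume "finite Y \<and> F0 \<subseteq> Y \<and> Y \<subseteq> A"
      then show "sum f Y \<in> sum f ` {E. finite E \<and> F0 \<subseteq> E \<and> E \<subseteq> A}" by (intro imageI) simp
    qed (use F0 in auto)
    have key: "sum f E = sum f (E - F0) + sum f F0" if "finite E" "F0 \<subseteq> E" for E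
      using sum.subset_diff[OF that(2,1)] .
    have inG: "sum f (E - F0) \<in> gen_subgroup (A - F0)" if "finite E" "E \<subseteq> A" for E
      unfolding f_def using that by (intro combos_in_gen) auto
    have "\<forall>x\<in>S. \<forall>y\<in>S. x - y \<in> U"
    proof (intro ballI)
      fix x y assume "x \<in> S" "y \<in> S"
      then obtain E E' where EE: "finite E" "F0 \<subseteq> E" "E \<subseteq> A" "x = sum f E"
        "finite E'" "F0 \<subseteq> E'" "E' \<subseteq> A" "y = sum f E'" unfolding S_def by auto
      have "x - y = sum f (E - F0) - sum f (E' - F0)" using EE key[of E] key[of E'] by simp
      also have "\<dots> \<in> gen_subgroup (A - F0)" using EE inG[of E] inG[of E'] by (intro subgroup_diff gen_is_subgroup)
      finally show "x - y \<in> U" using F0(3) by (rule subsetD[rotated])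
    qed
    then show "\<exists>S. eventually (\<lambda>x. x \<in> S) FF \<and> (\<forall>x\<in>S. \<forall>y\<in>S. x - y \<in> U)" using ev by blast
  qed
  have "\<exists>g. FF \<le> nhds g" using comp[unfolded group_complete_def, rule_format, of FF, OF conjI[OF nb cau]] .
  then obtain g where "FF \<le> nhds g" ..
  then have "(f has_sum g) A" unfolding has_sum_def filterlim_def FF_def by simp
  then show "(\<lambda>a. zmult (z a) a) summable_on A" unfolding summable_on_def f_def by blast
qed



lemma P_topspace: "topspace (P_top B) = (\<Pi>\<^sub>E b\<in>B. cyclic_subgroup b)"
  by (simp add: P_top_def)

lemma P_open_imp:
  assumes "openin (P_top B) S" "x \<in> S"
  shows "\<exists>F. finite F \<and> F \<subseteq> B \<and> (\<forall>y\<in>topspace (P_top B). (\<forall>b\<in>F. y b = x b) \<longrightarrow> y \<in> S)"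
proof -
  obtain U where U: "finite {i \<in> B. U i \<noteq> topspace (subtopology euclidean (cyclic_subgroup i))}"
     "\<forall>i\<in>B. openin (subtopology euclidean (cyclic_subgroup i)) (U i)" "x \<in> Pi\<^sub>E B U" "Pi\<^sub>E B U \<subseteq> S"
    using assms unfolding P_top_def openin_product_topology_alt by blast
  define F where "F = {i \<in> B. U i \<noteq> topspace (subtopology euclidean (cyclic_subgroup i))}"
  have "\<forall>y\<in>topspace (P_top B). (\<forall>b\<in>F. y b = x b) \<longrightarrow> y \<in> S"
  proof (intro ballI impI)
    fix y assume y: "y \<in> topspace (P_top B)" "\<forall>b\<in>F. y b = x b"
    have "y \<in> Pi\<^sub>E B U"
    proof (rule PiE_I)
      fix i assume i: "i \<in> B"
      show "y i \<in> U i"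
      proof (cases "i \<in> F")
        case True then show ?thesis using y(2) U(3) i by (auto simp: PiE_iff)
      next
        case False then have "U i = cyclic_subgroup i" using i by (simp add: F_def)
        then show ?thesis using y(1) i by (auto simp: P_topspace PiE_iff)
      qed
    next
      fix i assume "i \<notin> B" then show "y i = undefined" using y(1) by (auto simp: P_topspace PiE_iff extensional_def)
    qed
    then show "y \<in> S" using U(4) by blast
  qed
  then show ?thesis using U(1) by (intro exI[of _ F]) (auto simp: F_def)
qed

lemma discrete_openin:
  assumes "discrete_subspace S" "T \<subseteq> S"
  shows "openin (subtopology euclidean S) T"
proof -
  have "\<forall>x\<in>S. \<exists>U. open U \<and> U \<inter> S = {x}" using assms(1) unfolding discrete_subspace_def .
  from bchoice[OF this] obtain Op where Op0: "\<forall>x\<in>S. open (Op x) \<and> Op x \<inter> S = {x}" by (elim exE)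
  then have Op: "\<And>x. x \<in> S \<Longrightarrow> open (Op x) \<and> Op x \<inter> S = {x}" by blast
  have "open (\<Union>x\<in>T. Op x)" using Op assms(2) by (intro open_UN) blast
  moreover have "T = (\<Union>x\<in>T. Op x) \<inter> S"
  proof
    show "T \<subseteq> (\<Union>x\<in>T. Op x) \<inter> S" using Op assms(2) by blast
    show "(\<Union>x\<in>T. Op x) \<inter> S \<subseteq> T"
    proof
      fix y assume "y \<in> (\<Union>x\<in>T. Op x) \<inter> S"
      then obtain x where "x \<in> T" "y \<in> Op x" "y \<in> S" by blast
      then have "y \<in> Op x \<inter> S" by blast
      moreover have "x \<in> S" using \<open>x \<in> T\<close> assms(2) by blast
      ultimately have "y = x" using Op[of x] by blast
      then show "y \<in> T" using \<open>x \<in> T\<close> by simp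
    qed
  qed
  ultimately show ?thesis unfolding openin_subtopology by auto
qed

lemma P_open_if:
  fixes B :: "'a::topological_ab_group_add set"
  assumes disc: "\<forall>a. discrete_subspace (cyclic_subgroup (a::'a::topological_ab_group_add))"
    and sub: "S \<subseteq> topspace (P_top B)"
    and H: "\<forall>x\<in>S. \<exists>F. finite F \<and> F \<subseteq> B \<and> (\<forall>y\<in>topspace (P_top B). (\<forall>b\<in>F. y b = x b) \<longrightarrow> y \<in> S)"
  shows "openin (P_top B) S"
  unfolding P_top_def openin_product_topology_alt
proof (intro ballI)
  fix x assume x: "x \<in> S"
  then obtain F where F: "finite F" "F \<subseteq> B" "\<forall>y\<in>topspace (P_top B). (\<forall>b\<in>F. y b = x b) \<longrightarrow> y \<in> S"
    using H x by auto
  have xt: "x \<in> (\<Pi>\<^sub>E b\<in>B. cyclic_subgroup b)" using x sub by (auto simp: P_topspace)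
  define U where "U i = (if i \<in> F then {x i} else cyclic_subgroup i)" for i
  have "{i \<in> B. U i \<noteq> topspace (subtopology euclidean (cyclic_subgroup i))} \<subseteq> F"
    by (auto simp: U_def)
  then have "finite {i \<in> B. U i \<noteq> topspace (subtopology euclidean (cyclic_subgroup i))}"
    using F(1) by (rule finite_subset)
  moreover have "\<forall>i\<in>B. openin (subtopology euclidean (cyclic_subgroup i)) (U i)"
  proof
    fix i assume i: "i \<in> B"
    have "U i \<subseteq> cyclic_subgroup i" using xt i by (auto simp: U_def PiE_iff)
    then show "openin (subtopology euclidean (cyclic_subgroup i)) (U i)"
      using disc by (intro discrete_openin) simp_all
  qed
  moreover have "x \<in> Pi\<^sub>E B U" using xt by (auto simp: U_def PiE_iff)
  moreover have "Pi\<^sub>E B U \<subseteq> S"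
  proof
    fix y assume y: "y \<in> Pi\<^sub>E B U"
    have "y \<in> topspace (P_top B)" using y xt by (auto simp: P_topspace PiE_iff U_def split: if_splits)
    moreover have "\<forall>b\<in>F. y b = x b"
    proof
      fix b assume "b \<in> F"
      then have "b \<in> B" "U b = {x b}" using F(2) by (auto simp: U_def)
      then show "y b = x b" using y by (auto simp: PiE_iff)
    qed
    ultimately show "y \<in> S" using F(3) by blast
  qed
  ultimately show "\<exists>U. finite {i \<in> B. U i \<noteq> topspace (subtopology euclidean (cyclic_subgroup i))} \<and>
          (\<forall>i\<in>B. openin (subtopology euclidean (cyclic_subgroup i)) (U i)) \<and> x \<in> Pi\<^sub>E B U \<and> Pi\<^sub>E B U \<subseteq> S"
    by (intro exI[of _ U] conjI)
qed



lemma copy_imp_abs_summable: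
  fixes B :: "'a::topological_ab_group_add set"
  assumes Binf: "infinite B" and cp: "contains_copy_of_P B"
  shows "\<exists>A::'a set. infinite A \<and> absolutely_summable A"
proof -
  define T where "T = topspace (P_top B)"
  have T: "T = (\<Pi>\<^sub>E b\<in>B. cyclic_subgroup b)" by (simp add: T_def P_topspace)
  obtain H :: "'a set" and f where Hsub: "is_subgroup H" and bij: "bij_betw f (topspace (P_top B)) H"
     and add0: "\<forall>x\<in>topspace (P_top B). \<forall>y\<in>topspace (P_top B). f (P_add B x y) = f x + f y"
     and hom: "homeomorphic_map (P_top B) (subtopology euclidean H) f"
    using cp unfolding contains_copy_of_P_def by (elim exE conjE)
  have add: "\<And>x y. x \<in> T \<Longrightarrow> y \<in> T \<Longrightarrow> f (P_add B x y) = f x + f y"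
    using add0 unfolding T_def by blast
  have inj: "inj_on f T" and fT: "f ` T = H" using bij by (auto simp: bij_betw_def T_def)
  define z0 where "z0 = restrict (\<lambda>_. 0::'a) B"
  have z0T: "z0 \<in> T" by (simp add: T z0_def cyclic_zero)
  have Padd_T: "P_add B x y \<in> T" if "x \<in> T" "y \<in> T" for x y
    using that by (auto simp: T P_add_def PiE_iff cyclic_add)
  have "P_add B z0 z0 = z0" by (intro ext) (simp add: P_add_def z0_def restrict_def)
  then have "f z0 = f z0 + f z0" using add[OF z0T z0T] by simp
  then have fz0: "f z0 = 0" by simp
  define h where "h c k = restrict (\<lambda>d. if d = c then zmult k c else 0) B" for c k
  have hT: "h c k \<in> T" for c k by (auto simp: T h_def cyclic_zmult cyclic_zero)
  have hsucc: "P_add B (h c k) (h c 1) = h c (k+1)" if "c \<in> B" for c k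
    by (auto simp: P_add_def h_def zmult_succ)
  have fh: "f (h c k) = zmult k (f (h c 1))" if c: "c \<in> B" for c k
  proof (induction k rule: int_induct[where k=0])
    case base
    have "h c 0 = z0" by (auto simp: h_def z0_def)
    then show ?case by (simp add: fz0)
  next
    case (step1 i)
    have "f (h c (i+1)) = f (h c i) + f (h c 1)" using add[OF hT[of c i] hT[of c 1]] hsucc[OF c, of i] by simp
    then show ?case using step1 by (simp add: zmult_succ)
  next
    case (step2 i)
    have "f (h c i) = f (h c (i - 1)) + f (h c 1)" using add[OF hT[of c "i - 1"] hT[of c 1]] hsucc[OF c, of "i - 1"] by simp
    moreover have "zmult i (f (h c 1)) = zmult (i - 1) (f (h c 1)) + f (h c 1)"
      using zmult_succ[of "i - 1" "f (h c 1)"] by simp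
    ultimately show ?case using step2 by simp
  qed
  have sumT: "f (restrict (\<lambda>d. if d \<in> C then x d else 0) B) = (\<Sum>c\<in>C. f (restrict (\<lambda>d. if d = c then x d else 0) B))"
    if "finite C" "x \<in> T" for C x
    using that(1)
  proof (induction C rule: finite_induct)
    case empty
    have "restrict (\<lambda>d. if d \<in> {} then x d else 0) B = z0" by (simp add: z0_def)
    then show ?case by (simp add: fz0)
  next
    case (insert c C)
    have m1: "restrict (\<lambda>d. if d \<in> C then x d else 0) B \<in> T"
      using \<open>x \<in> T\<close> by (auto simp: T PiE_iff cyclic_zero)
    have m2: "restrict (\<lambda>d. if d = c then x d else 0) B \<in> T"
      using \<open>x \<in> T\<close> by (auto simp: T PiE_iff cyclic_zero)
    have "P_add B (restrict (\<lambda>d. if d \<in> C then x d else 0) B) (restrict (\<lambda>d. if d = c then x d else 0) B)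
          = restrict (\<lambda>d. if d \<in> insert c C then x d else 0) B"
      using insert(2) by (auto simp: P_add_def)
    then have "f (restrict (\<lambda>d. if d \<in> insert c C then x d else 0) B)
       = f (restrict (\<lambda>d. if d \<in> C then x d else 0) B) + f (restrict (\<lambda>d. if d = c then x d else 0) B)"
      using add[OF m1 m2] by simp
    then show ?case unfolding sum.insert[OF insert.hyps(1,2)] insert.IH[symmetric] by (simp only: add.commute)
  qed
  define e where "e c = f (h c 1)" for c
  have einj: "inj_on e (B - {0})"
  proof (rule inj_onI)
    fix c c' assume cc: "c \<in> B - {0}" "c' \<in> B - {0}" "e c = e c'"
    then have "h c 1 = h c' 1" using inj cc(3) hT[of c 1] hT[of c' 1] unfolding e_def by (simp add: inj_on_eq_iff)
    then have "h c 1 c = h c' 1 c" by simp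
    moreover have "h c 1 c = c" "h c' 1 c = (if c = c' then c' else 0)" using cc by (auto simp: h_def)
    ultimately show "c = c'" using cc by (cases "c = c'") auto
  qed
  define A where "A = e ` (B - {0})"
  have Ainf: "infinite A"
  proof
    assume "finite A"
    then have "finite (B - {0})" using einj unfolding A_def by (simp add: finite_image_iff)
    then show False using Binf by simp
  qed
  have "absolutely_summable A"
    unfolding absolutely_summable_def
  proof
    fix z :: "'a \<Rightarrow> int"
    define k where "k c = z (e c)" for c
    define x where "x = restrict (\<lambda>c. zmult (k c) c) B"
    have xT: "x \<in> T" by (auto simp: T x_def cyclic_zmult)
    show "\<exists>g. \<forall>U. open U \<and> 0 \<in> U \<longrightarrow> (\<exists>F. finite F \<and> F \<subseteq> A \<and>
           (\<forall>E. finite E \<and> F \<subseteq> E \<and> E \<subseteq> A \<longrightarrow> g - (\<Sum>a\<in>E. zmult (z a) a) \<in> U))"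
    proof (intro exI[of _ "f x"] allI impI)
      fix U :: "'a set" assume U: "open U \<and> 0 \<in> U"
      have cm: "continuous_map (P_top B) (subtopology euclidean H) f"
        using hom by (rule homeomorphic_imp_continuous_map)
      have "openin (subtopology euclidean H) (H \<inter> U)" using U by (auto simp: openin_subtopology)
      then have op: "openin (P_top B) {w \<in> T. f w \<in> H \<inter> U}"
        unfolding T_def by (rule openin_continuous_map_preimage[OF cm])
      have "z0 \<in> {w \<in> T. f w \<in> H \<inter> U}" using z0T fz0 U subgroup_zero[OF Hsub] by simp
      from P_open_imp[OF op this] obtain F0 where F0: "finite F0" "F0 \<subseteq> B"
        "\<forall>y\<in>T. (\<forall>b\<in>F0. y b = z0 b) \<longrightarrow> y \<in> {w \<in> T. f w \<in> H \<inter> U}" unfolding T_def by (elim exE conjE) simp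
      show "\<exists>F. finite F \<and> F \<subseteq> A \<and> (\<forall>E. finite E \<and> F \<subseteq> E \<and> E \<subseteq> A \<longrightarrow> f x - (\<Sum>a\<in>E. zmult (z a) a) \<in> U)"
      proof (intro exI[of _ "e ` (F0 - {0})"] conjI allI impI)
        show "finite (e ` (F0 - {0}))" using F0 by simp
        show "e ` (F0 - {0}) \<subseteq> A" using F0 by (auto simp: A_def)
      next
        fix E assume E: "finite E \<and> e ` (F0 - {0}) \<subseteq> E \<and> E \<subseteq> A"
        define C where "C = {c \<in> B - {0}. e c \<in> E}"
        have EC: "E = e ` C" using E by (auto simp: C_def A_def)
        have Cinj: "inj_on e C" using einj by (rule inj_on_subset) (auto simp: C_def)
        have Cfin: "finite C" using E EC Cinj by (simp add: finite_image_iff)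
        have F0C: "F0 - {0} \<subseteq> C"
        proof
          fix c assume c: "c \<in> F0 - {0}"
          then have "e c \<in> E" using E by blast
          then show "c \<in> C" using c F0(2) by (auto simp: C_def)
        qed
        have CB: "C \<subseteq> B" by (auto simp: C_def)
        have "(\<Sum>a\<in>E. zmult (z a) a) = (\<Sum>c\<in>C. zmult (z (e c)) (e c))"
          unfolding EC using Cinj by (simp add: sum.reindex)
        also have "\<dots> = (\<Sum>c\<in>C. f (h c (k c)))"
        proof (intro sum.cong refl)
          fix c assume "c \<in> C"
          then have "c \<in> B" using CB by blast
          have "f (h c (k c)) = zmult (k c) (f (h c 1))" by (rule fh[OF \<open>c \<in> B\<close>])
          then show "zmult (z (e c)) (e c) = f (h c (k c))" by (simp add: k_def e_def)
        qed
        also have "\<dots> = (\<Sum>c\<in>C. f (restrict (\<lambda>d. if d = c then x d else 0) B))"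
        proof (intro sum.cong refl)
          fix c assume "c \<in> C"
          then have "h c (k c) = restrict (\<lambda>d. if d = c then x d else 0) B"
            using CB by (auto simp: h_def x_def)
          then show "f (h c (k c)) = f (restrict (\<lambda>d. if d = c then x d else 0) B)" by simp
        qed
        also have "\<dots> = f (restrict (\<lambda>d. if d \<in> C then x d else 0) B)"
          using sumT[OF Cfin xT] by simp
        finally have s: "(\<Sum>a\<in>E. zmult (z a) a) = f (restrict (\<lambda>d. if d \<in> C then x d else 0) B)" .
        define r where "r = restrict (\<lambda>d. if d \<in> C then 0 else x d) B"
        have rT: "r \<in> T" using xT by (auto simp: r_def T PiE_iff cyclic_zero)
        have yT: "restrict (\<lambda>d. if d \<in> C then x d else 0) B \<in> T" using xT by (auto simp: T PiE_iff cyclic_zero)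
        have "P_add B (restrict (\<lambda>d. if d \<in> C then x d else 0) B) r = x"
          by (auto simp: P_add_def r_def x_def)
        then have "f x = f (restrict (\<lambda>d. if d \<in> C then x d else 0) B) + f r"
          using add[OF yT rT] by simp
        then have fx: "f x - (\<Sum>a\<in>E. zmult (z a) a) = f r" using s by simp
        have "\<forall>b\<in>F0. r b = z0 b"
        proof
          fix b assume b: "b \<in> F0"
          show "r b = z0 b"
          proof (cases "b \<in> C")
            case True then show ?thesis using b F0(2) by (simp add: r_def z0_def)
          next
            case False then have "b = 0" using F0C b by blast
            then show ?thesis using b F0(2) by (simp add: r_def z0_def x_def)
          qed
        qed
        then have "r \<in> {w \<in> T. f w \<in> H \<inter> U}" using F0(3) rT by simp
        then have "f r \<in> U" by simp
        then show "f x - (\<Sum>a\<in>E. zmult (z a) a) \<in> U" using fx by simp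
      qed
    qed
  qed
  then show ?thesis using Ainf by blast
qed



lemma gen_insert:
  "gen_subgroup (insert b S) \<subseteq> {d + c |d c. d \<in> gen_subgroup S \<and> c \<in> cyclic_subgroup (b::'a::ab_group_add)}"
proof (rule gen_least)
  show "is_subgroup {d + c |d c. d \<in> gen_subgroup S \<and> c \<in> cyclic_subgroup b}"
    unfolding is_subgroup_def
  proof (intro conjI ballI)
    show "0 \<in> {d + c |d c. d \<in> gen_subgroup S \<and> c \<in> cyclic_subgroup b}"
      using subgroup_zero[OF gen_is_subgroup[of S]] cyclic_zero[of b] by force
  next
    fix x y assume "x \<in> {d + c |d c. d \<in> gen_subgroup S \<and> c \<in> cyclic_subgroup b}"
       "y \<in> {d + c |d c. d \<in> gen_subgroup S \<and> c \<in> cyclic_subgroup b}"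
    then obtain d1 c1 d2 c2 where "x = d1 + c1" "d1 \<in> gen_subgroup S" "c1 \<in> cyclic_subgroup b"
      "y = d2 + c2" "d2 \<in> gen_subgroup S" "c2 \<in> cyclic_subgroup b" by blast
    moreover have "x - y = (d1 - d2) + (c1 - c2)" using calculation by simp
    moreover have "d1 - d2 \<in> gen_subgroup S" using calculation by (intro subgroup_diff gen_is_subgroup)
    moreover have "c1 - c2 \<in> cyclic_subgroup b" using calculation by (intro cyclic_diff)
    ultimately show "x - y \<in> {d + c |d c. d \<in> gen_subgroup S \<and> c \<in> cyclic_subgroup b}" by blast
  qed
next
  show "insert b S \<subseteq> {d + c |d c. d \<in> gen_subgroup S \<and> c \<in> cyclic_subgroup b}"
  proof
    fix x assume "x \<in> insert b S"
    then show "x \<in> {d + c |d c. d \<in> gen_subgroup S \<and> c \<in> cyclic_subgroup b}"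
    proof
      assume "x = b"
      then have "x = 0 + b" by simp
      then show ?thesis using subgroup_zero[OF gen_is_subgroup[of S]] cyclic_self[of b] by blast
    next
      assume "x \<in> S"
      then have "x = x + 0" "x \<in> gen_subgroup S" using gen_sub by auto
      then show ?thesis using cyclic_zero[of b] by blast
    qed
  qed
qed

lemma gen_empty: "gen_subgroup {} \<subseteq> {0::'a::ab_group_add}"
  by (rule gen_least) (auto simp: is_subgroup_def)

definition indep :: "'a::ab_group_add set \<Rightarrow> bool" where
  "indep S \<longleftrightarrow> (\<forall>c. (\<forall>b\<in>S. c b \<in> cyclic_subgroup b) \<longrightarrow> sum c S = 0 \<longrightarrow> (\<forall>b\<in>S. c b = 0))"

definition Inv :: "'a::topological_ab_group_add set \<Rightarrow> 'a set \<Rightarrow> 'a set \<Rightarrow> bool" where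
  "Inv A Bs F \<longleftrightarrow> finite Bs \<and> Bs \<subseteq> A \<and> finite F \<and> F \<subseteq> A \<and> Bs \<subseteq> F \<and> indep Bs \<and>
     (\<exists>U V. open U \<and> 0 \<in> U \<and> U \<inter> gen_subgroup Bs \<subseteq> {0} \<and> open V \<and> 0 \<in> V \<and>
        (\<forall>x\<in>V. \<forall>y\<in>V. \<forall>z\<in>V. x - y - z \<in> U) \<and> gen_subgroup (A - F) \<subseteq> V)"

lemma Inv_init:
  assumes "absolutely_Cauchy_summable (A::'a::topological_ab_group_add set)"
  shows "Inv A {} {}"
  unfolding Inv_def indep_def
proof (intro conjI exI[of _ UNIV])
  show "UNIV \<inter> gen_subgroup {} \<subseteq> {0::'a}" using gen_empty by auto
qed auto

lemma Inv_step:
  fixes A :: "'a::topological_ab_group_add set"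
  assumes disc: "\<forall>a::'a. discrete_subspace (cyclic_subgroup a)"
    and Ainf: "infinite A" and AC: "absolutely_Cauchy_summable A"
    and I: "Inv A Bs F"
  shows "\<exists>b F'. b \<in> A - F \<and> F \<subseteq> F' \<and> Inv A (insert b Bs) F'"
proof -
  from I obtain U V where fin: "finite Bs" "Bs \<subseteq> A" "finite F" "F \<subseteq> A" "Bs \<subseteq> F" and ind: "indep Bs"
    and UV: "open U" "0 \<in> U" "U \<inter> gen_subgroup Bs \<subseteq> {0}" "open V" "0 \<in> V"
      "\<forall>x\<in>V. \<forall>y\<in>V. \<forall>z\<in>V. x - y - z \<in> U" "gen_subgroup (A - F) \<subseteq> V"
    using I[unfolded Inv_def] by (elim conjE exE) (rule that; assumption)
  have "infinite (A - F)" by (rule Diff_infinite_finite[OF fin(3) Ainf])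
  then have "A - F \<noteq> {}" by (rule infinite_imp_nonempty)
  then obtain b where b: "b \<in> A - F" by blast
  have bBs: "b \<notin> Bs" using b fin(5) by blast
  have cycV: "cyclic_subgroup b \<subseteq> V"
  proof -
    have "b \<in> gen_subgroup (A - F)" using b gen_sub[of "A - F"] by blast
    then have "cyclic_subgroup b \<subseteq> gen_subgroup (A - F)" by (rule cyclic_subgroup_sub[OF gen_is_subgroup])
    then show ?thesis using UV(7) by (rule order_trans)
  qed
  have sumgen: "sum c Bs \<in> gen_subgroup Bs" if "\<forall>b'\<in>Bs. c b' \<in> cyclic_subgroup b'" for c
  proof (rule subgroup_sum[OF gen_is_subgroup])
    fix a assume "a \<in> Bs"
    then show "c a \<in> gen_subgroup Bs"
      using that cyclic_subgroup_sub[OF gen_is_subgroup, of a Bs] gen_sub[of Bs] by blast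
  qed
  have ind': "indep (insert b Bs)"
    unfolding indep_def
  proof (intro allI impI)
    fix c :: "'a \<Rightarrow> 'a" assume c: "\<forall>b'\<in>insert b Bs. c b' \<in> cyclic_subgroup b'" and s: "sum c (insert b Bs) = 0"
    have cB: "\<forall>b'\<in>Bs. c b' \<in> cyclic_subgroup b'" using c by blast
    have s2: "c b + sum c Bs = 0" using s fin(1) bBs by simp
    have "c b \<in> V" using c cycV by blast
    then have "0 - 0 - c b \<in> U" using UV(5,6) by blast
    moreover have "sum c Bs = 0 - 0 - c b" using s2 by (simp add: eq_neg_iff_add_eq_0 add.commute)
    ultimately have "sum c Bs \<in> U \<inter> gen_subgroup Bs" using sumgen[OF cB] by simp
    then have d0: "sum c Bs = 0" using UV(3) by blast
    then have "c b = 0" using s2 by simp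
    moreover have "\<forall>b'\<in>Bs. c b' = 0" using ind[unfolded indep_def, THEN spec, of c] cB d0 by blast
    ultimately show "\<forall>b'\<in>insert b Bs. c b' = 0" by blast
  qed
  have "0 \<in> cyclic_subgroup b" by (rule cyclic_zero)
  then obtain Ob where Ob: "open Ob" "Ob \<inter> cyclic_subgroup b = {0}" using disc unfolding discrete_subspace_def by blast
  define U' where "U' = V \<inter> Ob"
  have U': "open U'" "0 \<in> U'" using UV(4,5) Ob by (auto simp: U'_def)
  have U'gen: "U' \<inter> gen_subgroup (insert b Bs) \<subseteq> {0}"
  proof
    fix x assume x: "x \<in> U' \<inter> gen_subgroup (insert b Bs)"
    then have "x \<in> gen_subgroup (insert b Bs)" by blast
    then have "x \<in> {d + c |d c. d \<in> gen_subgroup Bs \<and> c \<in> cyclic_subgroup b}" using gen_insert[of b Bs] by (rule subsetD[rotated])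
    then obtain d c where dc: "x = d + c" "d \<in> gen_subgroup Bs" "c \<in> cyclic_subgroup b" by blast
    have "x \<in> V" "c \<in> V" using x dc(3) cycV by (auto simp: U'_def)
    then have "x - c - 0 \<in> U" using UV(5,6) by blast
    then have "d \<in> U \<inter> gen_subgroup Bs" using dc by simp
    then have "d = 0" using UV(3) by blast
    then have "c \<in> Ob \<inter> cyclic_subgroup b" using x dc by (auto simp: U'_def)
    then have "c = 0" using Ob(2) by blast
    then show "x \<in> {0}" using dc \<open>d = 0\<close> by simp
  qed
  obtain V' where V': "open V'" "0 \<in> V'" "V' \<subseteq> U'" "\<forall>x\<in>V'. \<forall>y\<in>V'. \<forall>z\<in>V'. x - y - z \<in> U'"
    using nbhd_diff3[OF U'] by blast
  obtain F'' where F'': "finite F''" "F'' \<subseteq> A" "gen_subgroup (A - F'') \<subseteq> V'"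
    using AC V'(1,2) unfolding absolutely_Cauchy_summable_def by blast
  define F' where "F' = F \<union> F'' \<union> {b}"
  have "gen_subgroup (A - F') \<subseteq> gen_subgroup (A - F'')" by (intro gen_mono) (auto simp: F'_def)
  then have g': "gen_subgroup (A - F') \<subseteq> V'" using F''(3) by blast
  have "Inv A (insert b Bs) F'"
    unfolding Inv_def
  proof (intro conjI)
    show "finite (insert b Bs)" using fin by simp
    show "insert b Bs \<subseteq> A" using fin b by blast
    show "finite F'" using fin F'' by (simp add: F'_def)
    show "F' \<subseteq> A" using fin F'' b by (auto simp: F'_def)
    show "insert b Bs \<subseteq> F'" using fin by (auto simp: F'_def)
    show "indep (insert b Bs)" by (rule ind')
    show "\<exists>U V. open U \<and> 0 \<in> U \<and> U \<inter> gen_subgroup (insert b Bs) \<subseteq> {0} \<and> open V \<and> 0 \<in> V \<and>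
        (\<forall>x\<in>V. \<forall>y\<in>V. \<forall>z\<in>V. x - y - z \<in> U) \<and> gen_subgroup (A - F') \<subseteq> V"
      using U' U'gen V' g' by (intro exI[of _ U'] exI[of _ V'] conjI) simp_all
  qed
  then show ?thesis using b by (intro exI[of _ b] exI[of _ F']) (auto simp: F'_def)
qed



lemma build_B:
  fixes A :: "'a::topological_ab_group_add set"
  assumes disc: "\<forall>a::'a. discrete_subspace (cyclic_subgroup a)"
    and Ainf: "infinite A" and AC: "absolutely_Cauchy_summable A"
  shows "\<exists>B Bs Fs. B \<subseteq> A \<and> infinite B \<and> B = (\<Union>n. Bs n) \<and> incseq Bs \<and>
           (\<forall>n. Inv A (Bs n) (Fs n) \<and> B - Bs n \<subseteq> A - Fs n)"
proof -
  define Step where "Step p q \<longleftrightarrow> (\<exists>b. b \<in> A - snd p \<and> snd p \<subseteq> snd q \<and> fst q = insert b (fst p) \<and> Inv A (fst q) (snd q))"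
    for p q :: "'a set \<times> 'a set"
  have step: "\<exists>q. Step p q" if ip: "Inv A (fst p) (snd p)" for p
  proof -
    obtain b F' where "b \<in> A - snd p" "snd p \<subseteq> F'" "Inv A (insert b (fst p)) F'"
      using Inv_step[OF disc Ainf AC ip] by blast
    then show ?thesis unfolding Step_def by (intro exI[of _ "(insert b (fst p), F')"]) auto
  qed
  define st where "st = rec_nat ({}, {}) (\<lambda>n p. SOME q. Step p q)"
  have st0: "st 0 = ({}, {})" and stS: "\<And>n. st (Suc n) = (SOME q. Step (st n) q)" by (simp_all add: st_def)
  have inv: "Inv A (fst (st n)) (snd (st n))" for n
  proof (induction n)
    case 0 then show ?case using Inv_init[OF AC] by (simp add: st0)
  next
    case (Suc n)
    have "Step (st n) (st (Suc n))" unfolding stS by (rule someI_ex[OF step[OF Suc]])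
    then show ?case unfolding Step_def by blast
  qed
  have hstep: "Step (st n) (st (Suc n))" for n unfolding stS by (rule someI_ex[OF step[OF inv]])
  define Bs where "Bs n = fst (st n)" for n
  define Fs where "Fs n = snd (st n)" for n
  from hstep have "\<forall>n. \<exists>b. b \<in> A - Fs n \<and> Fs n \<subseteq> Fs (Suc n) \<and> Bs (Suc n) = insert b (Bs n)"
    unfolding Step_def Bs_def Fs_def by blast
  then obtain bb where bb: "\<And>n. bb n \<in> A - Fs n" "\<And>n. Fs n \<subseteq> Fs (Suc n)" "\<And>n. Bs (Suc n) = insert (bb n) (Bs n)"
    by metis
  have invn: "Inv A (Bs n) (Fs n)" for n using inv by (simp add: Bs_def Fs_def)
  have incB: "incseq Bs" by (rule incseq_SucI) (auto simp: bb(3))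
  have incF: "incseq Fs" by (rule incseq_SucI) (simp add: bb(2))
  have BsF: "Bs n \<subseteq> Fs n" for n using invn[of n] unfolding Inv_def by blast
  have BsA: "Bs n \<subseteq> A" for n using invn[of n] unfolding Inv_def by blast
  have Bsfin: "finite (Bs n)" for n using invn[of n] unfolding Inv_def by blast
  have card: "card (Bs n) = n" for n
  proof (induction n)
    case 0 then show ?case by (simp add: Bs_def st0)
  next
    case (Suc n)
    have "bb n \<notin> Bs n" using bb(1)[of n] BsF[of n] by blast
    then show ?case using Suc Bsfin[of n] by (simp add: bb(3))
  qed
  define B where "B = (\<Union>n. Bs n)"
  have BA: "B \<subseteq> A" using BsA by (auto simp: B_def)
  have Binf: "infinite B"
  proof
    assume fB: "finite B"
    have "Bs (Suc (card B)) \<subseteq> B" by (auto simp: B_def)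
    then have "card (Bs (Suc (card B))) \<le> card B" using fB by (rule card_mono[rotated])
    then show False using card[of "Suc (card B)"] by simp
  qed
  have tail: "x \<in> Bs m \<Longrightarrow> x \<notin> Bs n \<Longrightarrow> x \<notin> Fs n" for x m n
  proof (induction m)
    case 0 then show ?case by (simp add: Bs_def st0)
  next
    case (Suc m)
    show ?case
    proof (cases "x \<in> Bs m")
      case True then show ?thesis using Suc by blast
    next
      case False
      then have x: "x = bb m" using Suc(2) bb(3)[of m] by blast
      show ?thesis
      proof (cases "n \<le> m")
        case True
        then have "Fs n \<subseteq> Fs m" using incF by (simp add: incseq_def)
        then show ?thesis using x bb(1)[of m] by blast
      next
        case False
        then have "Bs (Suc m) \<subseteq> Bs n" using incB by (simp add: incseq_def)
        then show ?thesis using Suc(2,3) by blast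
      qed
    qed
  qed
  have "\<forall>n. Inv A (Bs n) (Fs n) \<and> B - Bs n \<subseteq> A - Fs n"
  proof
    fix n
    have "B - Bs n \<subseteq> A - Fs n"
    proof
      fix x assume "x \<in> B - Bs n"
      then obtain m where "x \<in> Bs m" "x \<notin> Bs n" by (auto simp: B_def)
      then show "x \<in> A - Fs n" using tail BsA by blast
    qed
    then show "Inv A (Bs n) (Fs n) \<and> B - Bs n \<subseteq> A - Fs n" using invn by blast
  qed
  then show ?thesis using BA Binf incB by (intro exI[of _ B] exI[of _ Bs] exI[of _ Fs]) (simp add: B_def)
qed



lemma build_copy:
  fixes A :: "'a::{topological_ab_group_add, t2_space} set"
  assumes disc: "\<forall>a::'a. discrete_subspace (cyclic_subgroup a)"
    and AS: "absolutely_summable A" and AC: "absolutely_Cauchy_summable A"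
    and BA: "B \<subseteq> A" and BU: "B = (\<Union>n. Bs n)" and incB: "incseq Bs"
    and IB: "\<And>n. Inv A (Bs n) (Fs n)" and tailB: "\<And>n. B - Bs n \<subseteq> A - Fs n"
  shows "contains_copy_of_P B"
proof -
  define T where "T = topspace (P_top B)"
  have T: "T = (\<Pi>\<^sub>E b\<in>B. cyclic_subgroup b)" by (simp add: T_def P_topspace)
  define phi where "phi w = infsum w B" for w :: "'a \<Rightarrow> 'a"
  have summ: "(w has_sum phi w) B" if wT: "w \<in> T" for w
  proof -
    define zz where "zz b = (SOME k. w b = zmult k b)" for b
    have wz: "w b = zmult (zz b) b" if "b \<in> B" for b
    proof -
      have "w b \<in> cyclic_subgroup b" using wT that by (auto simp: T PiE_iff)
      then have "\<exists>k. w b = zmult k b" by (auto simp: cyclic_subgroup_def)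
      then show ?thesis unfolding zz_def by (rule someI_ex)
    qed
    define Z where "Z a = (if a \<in> B then zz a else 0)" for a
    have "(\<lambda>a. zmult (Z a) a) summable_on A" using AS[unfolded abs_summable_iff, THEN spec, of Z] .
    then obtain s where s: "((\<lambda>a. zmult (Z a) a) has_sum s) A" unfolding summable_on_def by blast
    have "(w has_sum s) B"
    proof -
      have "((\<lambda>a. zmult (Z a) a) has_sum s) A \<longleftrightarrow> (w has_sum s) B"
      proof (rule has_sum_cong_neutral)
        show "\<And>x. x \<in> B - A \<Longrightarrow> w x = 0" using BA by blast
        show "\<And>x. x \<in> A - B \<Longrightarrow> zmult (Z x) x = 0" by (simp add: Z_def)
        show "\<And>x. x \<in> A \<inter> B \<Longrightarrow> zmult (Z x) x = w x" by (simp add: Z_def wz)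
      qed
      then show ?thesis using s by simp
    qed
    then show ?thesis unfolding phi_def by (simp add: has_sum_iff)
  qed
  have z0T: "restrict (\<lambda>_. 0) B \<in> T" by (simp add: T cyclic_zero)
  have addT: "P_add B x y \<in> T" if "x \<in> T" "y \<in> T" for x y
    using that by (auto simp: T P_add_def PiE_iff cyclic_add)
  define Pd where "Pd x y = restrict (\<lambda>b. x b - y b) B" for x y :: "'a \<Rightarrow> 'a"
  have PdT: "Pd x y \<in> T" if "x \<in> T" "y \<in> T" for x y
    using that by (auto simp: T Pd_def PiE_iff cyclic_diff)
  have phi_add: "phi (P_add B x y) = phi x + phi y" if "x \<in> T" "y \<in> T" for x y
  proof -
    have "((\<lambda>b. x b + y b) has_sum (phi x + phi y)) B" using summ[OF that(1)] summ[OF that(2)] by (rule has_sum_add)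
    then have "(P_add B x y has_sum (phi x + phi y)) B"
      by (subst has_sum_cong[of B _ "\<lambda>b. x b + y b"]) (simp_all add: P_add_def)
    then show ?thesis unfolding phi_def by (rule infsumI)
  qed
  have phi_diff: "phi (Pd x y) = phi x - phi y" if "x \<in> T" "y \<in> T" for x y
  proof -
    have "((\<lambda>b. - y b) has_sum (- phi y)) B" using summ[OF that(2)] by (simp add: has_sum_uminus)
    then have "((\<lambda>b. x b + - y b) has_sum (phi x + - phi y)) B" using summ[OF that(1)] by (intro has_sum_add)
    then have "(Pd x y has_sum (phi x - phi y)) B"
      by (subst has_sum_cong[of B _ "\<lambda>b. x b + - y b"]) (simp_all add: Pd_def)
    then show ?thesis unfolding phi_def by (rule infsumI)
  qed
  have phi0: "phi (restrict (\<lambda>_. 0) B) = 0"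
    unfolding phi_def by (intro infsumI has_sum_0) simp
  have cyc_gen: "w b \<in> gen_subgroup S" if "w \<in> T" "b \<in> B" "b \<in> S" for w b S
  proof -
    have "w b \<in> cyclic_subgroup b" using that by (auto simp: T PiE_iff)
    moreover have "cyclic_subgroup b \<subseteq> gen_subgroup S"
      using that(3) gen_sub[of S] by (intro cyclic_subgroup_sub[OF gen_is_subgroup]) blast
    ultimately show ?thesis by blast
  qed
  have tail: "\<exists>v\<in>V. \<exists>g\<in>gen_subgroup (B - S). phi w - sum w S = v + g"
    if wT: "w \<in> T" and S: "finite S" "S \<subseteq> B" and V: "open V" "0 \<in> V" for w S V
  proof -
    have "\<exists>F'. finite F' \<and> F' \<subseteq> B \<and> (\<forall>E. finite E \<and> F' \<subseteq> E \<and> E \<subseteq> B \<longrightarrow> phi w - sum w E \<in> V)"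
      using summ[OF wT, unfolded has_sum_iff_raw, rule_format, OF conjI[OF V(1) V(2)]] .
    then obtain F' where F': "finite F'" "F' \<subseteq> B" "\<forall>E. finite E \<and> F' \<subseteq> E \<and> E \<subseteq> B \<longrightarrow> phi w - sum w E \<in> V"
      by (elim exE conjE)
    define E where "E = F' \<union> S"
    have E1: "finite E" using F'(1) S(1) by (simp add: E_def)
    have E2: "F' \<subseteq> E" by (simp add: E_def)
    have E3: "E \<subseteq> B" using F'(2) S(2) by (simp add: E_def)
    have E4: "S \<subseteq> E" by (simp add: E_def)
    have vV: "phi w - sum w E \<in> V" using F'(3) E1 E2 E3 by simp
    have sE: "sum w E = sum w (E - S) + sum w S" by (rule sum.subset_diff[OF E4 E1])
    have gG: "sum w (E - S) \<in> gen_subgroup (B - S)"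
    proof (rule subgroup_sum[OF gen_is_subgroup])
      fix a assume a: "a \<in> E - S"
      then have "a \<in> B" "a \<in> B - S" using E3 by auto
      then show "w a \<in> gen_subgroup (B - S)" by (rule cyc_gen[OF wT])
    qed
    have eq: "phi w - sum w S = (phi w - sum w E) + sum w (E - S)" using sE by (simp add: algebra_simps)
    show ?thesis
    proof (rule bexI[OF _ vV])
      show "\<exists>g\<in>gen_subgroup (B - S). phi w - sum w S = (phi w - sum w E) + g" using eq gG by (rule bexI)
    qed
  qed
  have K: "\<exists>W. open W \<and> 0 \<in> W \<and> (\<forall>w\<in>T. phi w \<in> W \<longrightarrow> (\<forall>b\<in>Bs n. w b = 0))" for n
  proof -
    from IB[of n] obtain U V where fin: "finite (Bs n)" "Bs n \<subseteq> A" and ind: "indep (Bs n)"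
      and UV: "open U" "0 \<in> U" "U \<inter> gen_subgroup (Bs n) \<subseteq> {0}" "open V" "0 \<in> V"
      "\<forall>x\<in>V. \<forall>y\<in>V. \<forall>z\<in>V. x - y - z \<in> U" "gen_subgroup (A - Fs n) \<subseteq> V"
      unfolding Inv_def by (elim conjE exE) (rule that; assumption)
    have BsB: "Bs n \<subseteq> B" using BU by blast
    have genV: "gen_subgroup (B - Bs n) \<subseteq> V" using gen_mono[OF tailB[of n]] UV(7) by (rule order_trans)
    have "\<forall>w\<in>T. phi w \<in> V \<longrightarrow> (\<forall>b\<in>Bs n. w b = 0)"
    proof (rule ballI, rule impI)
      fix w assume wT: "w \<in> T" and pw: "phi w \<in> V"
      obtain v g where vg: "v \<in> V" "g \<in> gen_subgroup (B - Bs n)" "phi w - sum w (Bs n) = v + g"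
        using tail[OF wT fin(1) BsB UV(4,5)] by blast
      have gV: "g \<in> V" using vg(2) genV by blast
      have inU: "phi w - v - g \<in> U" using UV(6)[rule_format, OF pw vg(1) gV] .
      have "sum w (Bs n) = phi w - (phi w - sum w (Bs n))" by simp
      also have "\<dots> = phi w - (v + g)" using vg(3) by simp
      also have "\<dots> = phi w - v - g" by (simp add: diff_diff_eq)
      finally have seq: "sum w (Bs n) = phi w - v - g" .
      have sg: "sum w (Bs n) \<in> gen_subgroup (Bs n)"
      proof (rule subgroup_sum[OF gen_is_subgroup])
        fix a assume a: "a \<in> Bs n"
        then have "a \<in> B" using BsB by blast
        then show "w a \<in> gen_subgroup (Bs n)" using a by (rule cyc_gen[OF wT])
      qed
      have "sum w (Bs n) \<in> U \<inter> gen_subgroup (Bs n)" using inU seq sg by simp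
      then have s0: "sum w (Bs n) = 0" using UV(3) by blast
      have cy: "\<forall>b\<in>Bs n. w b \<in> cyclic_subgroup b" using wT BsB by (auto simp: T PiE_iff)
      have "(\<forall>b\<in>Bs n. w b \<in> cyclic_subgroup b) \<longrightarrow> sum w (Bs n) = 0 \<longrightarrow> (\<forall>b\<in>Bs n. w b = 0)"
        using ind[unfolded indep_def] by (rule allE)
      then show "\<forall>b\<in>Bs n. w b = 0" using cy s0 by blast
    qed
    then show ?thesis using UV(4,5) by (intro exI[of _ V] conjI)
  qed
  have phiinj: "inj_on phi T"
  proof (rule inj_onI)
    fix x y assume xy: "x \<in> T" "y \<in> T" "phi x = phi y"
    then have p0: "phi (Pd x y) = 0" using phi_diff by simp
    show "x = y"
    proof (rule PiE_ext)
      show "x \<in> (\<Pi>\<^sub>E b\<in>B. cyclic_subgroup b)" "y \<in> (\<Pi>\<^sub>E b\<in>B. cyclic_subgroup b)" using xy T by auto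
    next
      fix b assume "b \<in> B"
      then obtain n where n: "b \<in> Bs n" using BU by blast
      obtain W where W: "open W" "0 \<in> W" "\<forall>w\<in>T. phi w \<in> W \<longrightarrow> (\<forall>b\<in>Bs n. w b = 0)" using K[of n] by blast
      have "Pd x y b = 0" using W(2,3) p0 PdT[OF xy(1,2)] n by auto
      then show "x b = y b" using \<open>b \<in> B\<close> by (simp add: Pd_def)
    qed
  qed
  define H where "H = phi ` T"
  have Hsub: "is_subgroup H"
    unfolding is_subgroup_def H_def
  proof (intro conjI ballI)
    show "0 \<in> phi ` T" using phi0 z0T by (metis image_eqI)
  next
    fix u v assume "u \<in> phi ` T" "v \<in> phi ` T"
    then obtain x y where "x \<in> T" "y \<in> T" "u = phi x" "v = phi y" by blast
    then show "u - v \<in> phi ` T" using phi_diff PdT by (metis image_eqI)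
  qed
  have cont: "continuous_map (P_top B) euclidean phi"
    unfolding continuous_map_def
  proof (intro conjI allI impI)
    show "phi \<in> topspace (P_top B) \<rightarrow> topspace euclidean" by simp
  next
    fix U :: "'a set" assume "openin euclidean U"
    then have U: "open U" by simp
    show "openin (P_top B) {x \<in> topspace (P_top B). phi x \<in> U}"
    proof (rule P_open_if[OF disc])
      show "{x \<in> topspace (P_top B). phi x \<in> U} \<subseteq> topspace (P_top B)" by blast
    next
      show "\<forall>x\<in>{x \<in> topspace (P_top B). phi x \<in> U}. \<exists>F. finite F \<and> F \<subseteq> B \<and>
              (\<forall>y\<in>topspace (P_top B). (\<forall>b\<in>F. y b = x b) \<longrightarrow> y \<in> {x \<in> topspace (P_top B). phi x \<in> U})"
      proof
        fix x assume "x \<in> {x \<in> topspace (P_top B). phi x \<in> U}"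
        then have xT: "x \<in> T" and xU: "phi x \<in> U" by (auto simp: T_def)
        define W where "W = (\<lambda>u. phi x + u) -` U"
        have W: "open W" "0 \<in> W" unfolding W_def using U xU by (auto intro!: open_vimage continuous_intros)
        obtain V1 where V1: "open V1" "0 \<in> V1" "\<forall>a\<in>V1. \<forall>b\<in>V1. a - b \<in> W" using nbhd_diff[OF W] by blast
        obtain F where F: "finite F" "F \<subseteq> A" "gen_subgroup (A - F) \<subseteq> V1"
          using AC V1(1,2) unfolding absolutely_Cauchy_summable_def by blast
        have FB: "finite (F \<inter> B)" "F \<inter> B \<subseteq> B" using F by auto
        have gB: "gen_subgroup (B - F \<inter> B) \<subseteq> V1"
          using gen_mono[of "B - F \<inter> B" "A - F"] BA F(3) by blast
        show "\<exists>F. finite F \<and> F \<subseteq> B \<and>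
              (\<forall>y\<in>topspace (P_top B). (\<forall>b\<in>F. y b = x b) \<longrightarrow> y \<in> {x \<in> topspace (P_top B). phi x \<in> U})"
        proof (intro exI[of _ "F \<inter> B"] conjI ballI impI)
          fix y assume yT': "y \<in> topspace (P_top B)" and agree: "\<forall>b\<in>F \<inter> B. y b = x b"
          have yT: "y \<in> T" using yT' by (simp add: T_def)
          define w where "w = Pd y x"
          have wT: "w \<in> T" unfolding w_def using PdT[OF yT xT] .
          have w0: "sum w (F \<inter> B) = 0" using agree by (intro sum.neutral) (auto simp: w_def Pd_def)
          obtain v g where vg: "v \<in> V1" "g \<in> gen_subgroup (B - F \<inter> B)" "phi w - sum w (F \<inter> B) = v + g"
            using tail[OF wT FB V1(1,2)] by blast
          have "- g \<in> gen_subgroup (B - F \<inter> B)" using vg(2) by (rule subgroup_neg[OF gen_is_subgroup])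
          then have "- g \<in> V1" using gB by blast
          then have "v - (- g) \<in> W" using V1(3) vg(1) by blast
          then have "phi w \<in> W" using vg(3) w0 by simp
          moreover have "phi w = phi y - phi x" unfolding w_def by (rule phi_diff[OF yT xT])
          ultimately have "phi y \<in> U" by (simp add: W_def)
          then show "y \<in> {x \<in> topspace (P_top B). phi x \<in> U}" using yT' by simp
        qed (use FB in auto)
      qed
    qed
  qed
  have contH: "continuous_map (P_top B) (subtopology euclidean H) phi"
    using cont by (auto simp: continuous_map_in_subtopology H_def T_def)
  have opn: "open_map (P_top B) (subtopology euclidean H) phi"
    unfolding open_map_def
  proof (intro allI impI)
    fix S assume S: "openin (P_top B) S"
    have ST: "S \<subseteq> T" using openin_subset[OF S] by (simp add: T_def)
    show "openin (subtopology euclidean H) (phi ` S)"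
    proof (subst openin_subopen, intro ballI)
      fix p assume "p \<in> phi ` S"
      then obtain x where x: "x \<in> S" "p = phi x" by blast
      have xT: "x \<in> T" using x ST by blast
      obtain F where F: "finite F" "F \<subseteq> B" "\<forall>y\<in>topspace (P_top B). (\<forall>b\<in>F. y b = x b) \<longrightarrow> y \<in> S"
        using P_open_imp[OF S x(1)] by blast
      obtain n where n: "F \<subseteq> Bs n" using finite_in_chain[OF F(1) _ incB] F(2) BU by blast
      obtain W where W: "open W" "0 \<in> W" "\<forall>w\<in>T. phi w \<in> W \<longrightarrow> (\<forall>b\<in>Bs n. w b = 0)" using K[of n] by blast
      define Q where "Q = H \<inter> ((\<lambda>u. u - phi x) -` W)"
      have "open ((\<lambda>u. u - phi x) -` W)" using W(1) by (auto intro!: open_vimage continuous_intros)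
      then have Qo: "openin (subtopology euclidean H) Q" unfolding Q_def openin_subtopology by auto
      have pQ: "p \<in> Q" using x xT W(2) by (auto simp: Q_def H_def)
      have "Q \<subseteq> phi ` S"
      proof
        fix u assume "u \<in> Q"
        then obtain y where y: "y \<in> T" "u = phi y" "phi y - phi x \<in> W" by (auto simp: Q_def H_def)
        have "phi (Pd y x) \<in> W" using y(3) phi_diff[OF y(1) xT] by simp
        then have "\<forall>b\<in>Bs n. Pd y x b = 0" using W(3) PdT[OF y(1) xT] by blast
        then have "\<forall>b\<in>F. y b = x b"
        proof (intro ballI)
          fix b assume h: "\<forall>b\<in>Bs n. Pd y x b = 0" and b: "b \<in> F"
          then have "b \<in> Bs n" "b \<in> B" using n F(2) by auto
          have "Pd y x b = 0" using h \<open>b \<in> Bs n\<close> by blast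
          then show "y b = x b" using \<open>b \<in> B\<close> by (simp add: Pd_def)
        qed
        then have "y \<in> S" using F(3) y(1) by (simp add: T_def)
        then show "u \<in> phi ` S" using y(2) by blast
      qed
      then show "\<exists>Q. openin (subtopology euclidean H) Q \<and> p \<in> Q \<and> Q \<subseteq> phi ` S" using Qo pQ by blast
    qed
  qed
  have hom: "homeomorphic_map (P_top B) (subtopology euclidean H) phi"
  proof (rule bijective_open_imp_homeomorphic_map[OF contH opn])
    show "phi ` topspace (P_top B) = topspace (subtopology euclidean H)" by (simp add: H_def T_def)
    show "inj_on phi (topspace (P_top B))" using phiinj by (simp add: T_def)
  qed
  have bij: "bij_betw phi (topspace (P_top B)) H" using phiinj by (simp add: bij_betw_def H_def T_def)
  have addP: "\<forall>x\<in>topspace (P_top B). \<forall>y\<in>topspace (P_top B). phi (P_add B x y) = phi x + phi y"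
    using phi_add by (simp add: T_def)
  show ?thesis unfolding contains_copy_of_P_def
    by (intro exI[of _ H] exI[of _ phi] conjI Hsub bij addP hom)
qed


theorem corollary7p4:
  assumes "\<forall>a::'a::{topological_ab_group_add, t2_space}. discrete_subspace (cyclic_subgroup a)"
  shows "((\<exists>A::'a set. infinite A \<and> absolutely_summable A)
            \<longleftrightarrow> (\<exists>B::'a set. infinite B \<and> contains_copy_of_P B))
         \<and> (group_complete TYPE('a) \<longrightarrow>
            ((\<exists>A::'a set. infinite A \<and> absolutely_summable A)
              \<longleftrightarrow> (\<exists>A::'a set. infinite A \<and> absolutely_Cauchy_summable A)))"
proof (intro conjI impI iffI)
  assume "\<exists>A::'a set. infinite A \<and> absolutely_summable A"
  then obtain A :: "'a set" where A: "infinite A" "absolutely_summable A" by blast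
  have AC: "absolutely_Cauchy_summable A" using A(2) by (rule abs_summable_imp_Cauchy)
  obtain B Bs Fs where B: "B \<subseteq> A" "infinite B" "B = (\<Union>n. Bs n)" "incseq Bs"
      "\<forall>n. Inv A (Bs n) (Fs n) \<and> B - Bs n \<subseteq> A - Fs n"
    using build_B[OF assms A(1) AC] by blast
  have "contains_copy_of_P B"
    using build_copy[OF assms A(2) AC B(1) B(3) B(4)] B(5) by blast
  then show "\<exists>B::'a set. infinite B \<and> contains_copy_of_P B" using B(2) by blast
next
  assume "\<exists>B::'a set. infinite B \<and> contains_copy_of_P B"
  then obtain B :: "'a set" where "infinite B" "contains_copy_of_P B" by blast
  then show "\<exists>A::'a set. infinite A \<and> absolutely_summable A" by (rule copy_imp_abs_summable)
next
  assume "\<exists>A::'a set. infinite A \<and> absolutely_summable A"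
  then obtain A :: "'a set" where "infinite A" "absolutely_summable A" by blast
  then show "\<exists>A::'a set. infinite A \<and> absolutely_Cauchy_summable A" using abs_summable_imp_Cauchy by blast
next
  assume c: "group_complete TYPE('a)" and "\<exists>A::'a set. infinite A \<and> absolutely_Cauchy_summable A"
  then obtain A :: "'a set" where "infinite A" "absolutely_Cauchy_summable A" by blast
  then show "\<exists>A::'a set. infinite A \<and> absolutely_summable A" using Cauchy_imp_abs_summable[OF _ c] by blast
qed

end
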